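(* Let $\mathcal I$ be a finite set with $|\mathcal I|\ge 2$, $\nu\in(0,1)$, and $L\ge 1$ an integer. Define functions on $\mathbb R^{\mathcal I}$ by backward recursion: $$V_L^*(\mathbf m)=\max_{a\in\mathcal I}\frac{e^{m[a]}}{\sum_{l\in\mathcal I}e^{m[l]}},$$ and for $k=L-1,L-2,\dots,0$ and $a\in\mathcal I$, $$q_k(\mathbf m,a)=\int_0^\infty V_{k+1}^*\big(\mathbf m+J(y)\boldsymbol\delta[a]\big)\,f(y\mid\mathbf m,a)\,dy,\qquad V_k^*(\mathbf m)=\max_{a\in\mathcal I}q_k(\mathbf m,a),$$ where $J(y)=(1-\nu)y+\ln\nu$, $\boldsymbol\delta[a]\in\mathbb R^{\mathcal I}$ is the vector with entries $\delta[a,x]$, $x\in\mathcal I$, and, with $p_a(\mathbf m)=e^{m[a]}/\sum_{l\in\mathcal I}e^{m[l]}$, $$f(y\mid\mathbf m,a)=p_a(\mathbf m)\,\nu e^{-\nu y}+\big(1-p_a(\mathbf m)\big)e^{-y},\quad y\ge 0.$$ Then for every $k\in\{0,\dots,L-1\}$, $\mathbf m\in\mathbb R^{\mathcal I}$ and $a\in\mathcal I$, $$q_k(\mathbf m,a)\ \ge\ q_k^{LB}(\mathbf m,a):=\frac{1}{\sum_{l\in\mathcal I}e^{m[l]}}\Big[\xi(a;\mathbf m)+\exp\Big\{\frac{\min_{x_i\neq x_j}\big(m[x_i]-\nu m[x_j]\big)}{1-\nu}\Big\}\,h(\nu)\sum_{n=1}^{L-k-1}g(\nu)^n\Big],$$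 (where $\sum_{n=1}^{L-k-1}g(\nu)^n=\frac{g(\nu)-g(\nu)^{L-k}}{1-g(\nu)}$ when $g(\nu)\ne1$), and $$q_k(\mathbf m,a)\ \le\ q_k^{UB}(\mathbf m,a):=\frac{[1+h(\nu)]^{L-k-1}}{\sum_{l\in\mathcal I}e^{m[l]}}\,\xi(a;\mathbf m).$$ Moreover, if $x_{[1]},x_{[2]},\dots$ is an ordering of $\mathcal I$ with $m[x_{[1]}]\ge m[x_{[2]}]\ge\cdots$, then for every $k\in\{0,\dots,L-1\}$, $$q_k^{LB}(\mathbf m,x_{[2]})=\max_{a\in\mathcal I}q_k^{LB}(\mathbf m,a)\le V_k^*(\mathbf m)\le \max_{a\in\mathcal I}q_k^{UB}(\mathbf m,a)=q_k^{UB}(\mathbf m,x_{[2]}).$$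
   Context: The minimum $\min_{x_i\neq x_j}$ ranges over ordered pairs of distinct elements of $\mathcal I$. For $a\in\mathcal I$, $M_a=\max_{\hat a\neq a}m[\hat a]$ and $$\xi(a;\mathbf m)=\begin{cases}\exp\{m[a]\}, & \text{if } M_a-m[a]<\ln\nu,\\ \exp\{M_a\}+h(\nu)\exp\Big\{\dfrac{m[a]-\nu M_a}{1-\nu}\Big\}, & \text{otherwise,}\end{cases}$$ $h(\nu)=\exp\{\frac{\nu}{1-\nu}\ln\nu\}-\exp\{\frac{\ln\nu}{1-\nu}\}>0$ and $g(\nu)=\exp\{\frac{\ln\nu}{1-\nu}\}\big[\frac{1}{1+\nu}-\frac{\ln\nu}{1-\nu}\big]>0$. Interpretation: $\mathbf m$ is the log-belief (preference) vector over beam indices, $q_k$ the Q-function and $V_k^*$ the optimal value (maximal probability of correct alignment at the end of $L$ beam-alignment slots). *)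

theory Defs
  imports "HOL-Analysis.Analysis"
begin

definition Zsum :: "('i::finite \<Rightarrow> real) \<Rightarrow> real" where
  "Zsum m = (\<Sum>l\<in>UNIV. exp (m l))"

definition pa :: "('i::finite \<Rightarrow> real) \<Rightarrow> 'i \<Rightarrow> real" where
  "pa m a = exp (m a) / Zsum m"

definition Jfun :: "real \<Rightarrow> real \<Rightarrow> real" where
  "Jfun \<nu> y = (1 - \<nu>) * y + ln \<nu>"

definition deltav :: "'i \<Rightarrow> 'i \<Rightarrow> real" where
  "deltav a x = (if x = a then 1 else 0)"

definition fdens :: "real \<Rightarrow> ('i::finite \<Rightarrow> real) \<Rightarrow> 'i \<Rightarrow> real \<Rightarrow> real" where
  "fdens \<nu> m a y = pa m a * \<nu> * exp (- \<nu> * y) + (1 - pa m a) * exp (- y)"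

text \<open>Value with n beam-alignment slots remaining: Wrem nu n = V*_{L-n}.\<close>
primrec Wrem :: "real \<Rightarrow> nat \<Rightarrow> ('i::finite \<Rightarrow> real) \<Rightarrow> real" where
  "Wrem \<nu> 0 m = Max (range (\<lambda>a. pa m a))"
| "Wrem \<nu> (Suc n) m = Max (range (\<lambda>a.
      LINT y:{0..}|lborel. Wrem \<nu> n (\<lambda>x. m x + Jfun \<nu> y * deltav a x) * fdens \<nu> m a y))"

definition Vstar :: "real \<Rightarrow> nat \<Rightarrow> nat \<Rightarrow> ('i::finite \<Rightarrow> real) \<Rightarrow> real" where
  "Vstar \<nu> L k m = Wrem \<nu> (L - k) m"

definition qfun :: "real \<Rightarrow> nat \<Rightarrow> nat \<Rightarrow> ('i::finite \<Rightarrow> real) \<Rightarrow> 'i \<Rightarrow> real" where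
  "qfun \<nu> L k m a =
     (LINT y:{0..}|lborel. Vstar \<nu> L (k + 1) (\<lambda>x. m x + Jfun \<nu> y * deltav a x) * fdens \<nu> m a y)"

definition hfun :: "real \<Rightarrow> real" where
  "hfun \<nu> = exp (\<nu> / (1 - \<nu>) * ln \<nu>) - exp (ln \<nu> / (1 - \<nu>))"

definition gfun :: "real \<Rightarrow> real" where
  "gfun \<nu> = exp (ln \<nu> / (1 - \<nu>)) * (1 / (1 + \<nu>) - ln \<nu> / (1 - \<nu>))"

definition Mmax :: "('i::finite \<Rightarrow> real) \<Rightarrow> 'i \<Rightarrow> real" where
  "Mmax m a = Max (m ` (UNIV - {a}))"

definition xi :: "real \<Rightarrow> 'i::finite \<Rightarrow> ('i \<Rightarrow> real) \<Rightarrow> real" where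
  "xi \<nu> a m = (if Mmax m a - m a < ln \<nu> then exp (m a)
     else exp (Mmax m a) + hfun \<nu> * exp ((m a - \<nu> * Mmax m a) / (1 - \<nu>)))"

definition minpair :: "real \<Rightarrow> ('i::finite \<Rightarrow> real) \<Rightarrow> real" where
  "minpair \<nu> m = Min {m xi - \<nu> * m xj | xi xj. xi \<noteq> xj}"

definition qLB :: "real \<Rightarrow> nat \<Rightarrow> nat \<Rightarrow> ('i::finite \<Rightarrow> real) \<Rightarrow> 'i \<Rightarrow> real" where
  "qLB \<nu> L k m a = (1 / Zsum m) * (xi \<nu> a m
     + exp (minpair \<nu> m / (1 - \<nu>)) * hfun \<nu> * (\<Sum>n\<in>{1..L - k - 1}. gfun \<nu> ^ n))"

definition qUB :: "real \<Rightarrow> nat \<Rightarrow> nat \<Rightarrow> ('i::finite \<Rightarrow> real) \<Rightarrow> 'i \<Rightarrow> real" where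
  "qUB \<nu> L k m a = (1 + hfun \<nu>) ^ (L - k - 1) / Zsum m * xi \<nu> a m"

end

theory Submission
  imports Defs
begin


definition sh :: "('i::finite \<Rightarrow> real) \<Rightarrow> 'i \<Rightarrow> real \<Rightarrow> 'i \<Rightarrow> real" where
  "sh m a t = (\<lambda>x. m x + t * deltav a x)"

lemma Zsum_pos: "Zsum (m::'i::finite\<Rightarrow>real) > 0"
  unfolding Zsum_def by (rule sum_pos) auto

lemma sh_a[simp]: "sh m a t a = m a + t"
  by (simp add: sh_def deltav_def)
lemma sh_other: "x \<noteq> a \<Longrightarrow> sh m a t x = m x"
  by (simp add: sh_def deltav_def)

lemma Zsum_split: "Zsum (m::'i::finite\<Rightarrow>real) = exp (m a) + (\<Sum>l\<in>UNIV-{a}. exp (m l))"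
  unfolding Zsum_def by (subst sum.remove[of UNIV a]) auto

lemma Zsum_sh: "Zsum (sh m a t) = Zsum (m::'i::finite\<Rightarrow>real) - exp (m a) + exp (m a + t)"
proof -
  have "(\<Sum>l\<in>UNIV-{a}. exp (sh m a t l)) = (\<Sum>l\<in>UNIV-{a}. exp (m l))"
    by (rule sum.cong) (auto simp: sh_other)
  thus ?thesis using Zsum_split[of "sh m a t" a] Zsum_split[of m a] by simp
qed

lemma exp_J: assumes "0 < \<nu>"
  shows "exp (c + Jfun \<nu> y) * exp (-y) = exp c * \<nu> * exp (-\<nu>*y)"
proof -
  have "exp (c + Jfun \<nu> y) * exp (-y) = exp (c + ln \<nu> + (-\<nu>*y))"
    unfolding Jfun_def by (simp add: mult_exp_exp algebra_simps)
  also have "\<dots> = exp c * exp (ln \<nu>) * exp (-\<nu>*y)"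
    by (simp only: exp_add)
  also have "\<dots> = exp c * \<nu> * exp (-\<nu>*y)"
    using assms by simp
  finally show ?thesis .
qed

lemma fdens_eq: assumes "0 < \<nu>"
  shows "fdens \<nu> m a y = Zsum (sh m a (Jfun \<nu> y)) * exp (-y) / Zsum (m::'i::finite\<Rightarrow>real)"
proof -
  have Z: "Zsum m > 0" by (rule Zsum_pos)
  have "Zsum (sh m a (Jfun \<nu> y)) * exp (-y) = (Zsum m - exp (m a)) * exp (-y) + exp (m a) * \<nu> * exp (-\<nu>*y)"
    unfolding Zsum_sh using exp_J[OF assms, of "m a" y] by (simp add: algebra_simps)
  thus ?thesis using Z unfolding fdens_def pa_def by (simp add: field_simps)
qed

lemma fdens_nonneg: assumes "0 < \<nu>" shows "0 \<le> fdens \<nu> (m::'i::finite\<Rightarrow>real) a y"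
  unfolding fdens_eq[OF assms] using Zsum_pos[of m] Zsum_pos[of "sh m a (Jfun \<nu> y)"]
  by simp

lemma pa_bounds: "0 < pa (m::'i::finite\<Rightarrow>real) a" "pa m a \<le> 1"
proof -
  show "0 < pa m a" unfolding pa_def using Zsum_pos[of m] by simp
  have "exp (m a) \<le> Zsum m" unfolding Zsum_def
    by (rule member_le_sum) auto
  thus "pa m a \<le> 1" unfolding pa_def using Zsum_pos[of m] by simp
qed

lemma fdens_le: assumes "0 < \<nu>" "\<nu> < 1" "0 \<le> y"
  shows "fdens \<nu> (m::'i::finite\<Rightarrow>real) a y \<le> \<nu> * exp (-\<nu>*y) + exp (-y)"
proof -
  have p: "0 < pa m a" "pa m a \<le> 1" by (rule pa_bounds)+
  have "pa m a * \<nu> * exp (-\<nu>*y) \<le> \<nu> * exp (-\<nu>*y)"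
    using p assms by (simp add: mult_le_cancel_right1 mult_left_le_one_le)
  moreover have "(1 - pa m a) * exp (-y) \<le> exp (-y)" using p by (simp add: mult_le_cancel_right1)
  ultimately show ?thesis unfolding fdens_def by linarith
qed

lemma Max_range_eq: "(\<And>b. f b \<le> f (b0::'i::finite)) \<Longrightarrow> Max (range f) = (f b0 :: real)"
  by (rule Max_eqI) auto

lemma Max_range_ge: "(f::'i::finite\<Rightarrow>real) b \<le> Max (range f)"
  by (rule Max_ge) auto

lemma argmax_ex: "\<exists>b0. \<forall>b. (f::'i::finite\<Rightarrow>real) b \<le> f b0"
proof -
  have "Max (range f) \<in> range f" by (rule Max_in) auto
  then obtain b0 where "f b0 = Max (range f)" by (metis rangeE)
  thus ?thesis using Max_range_ge[of f] by metis
qed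

lemma W0_eq: "Wrem \<nu> 0 m = exp (Max (range m)) / Zsum (m::'i::finite\<Rightarrow>real)"
proof -
  obtain x1 where x1: "\<And>b. m b \<le> m x1" using argmax_ex by blast
  have "Max (range m) = m x1" by (rule Max_range_eq) (rule x1)
  moreover have "Max (range (pa m)) = pa m x1"
    by (rule Max_range_eq) (use x1 Zsum_pos[of m] in \<open>auto simp: pa_def divide_right_mono\<close>)
  ultimately show ?thesis by (simp add: pa_def)
qed

lemma other_ex: assumes "CARD('i::finite) \<ge> 2" shows "\<exists>b::'i. b \<noteq> a"
proof (rule ccontr)
  assume "\<not> (\<exists>b::'i. b \<noteq> a)"
  hence "(UNIV::'i set) = {a}" by auto
  hence "card (UNIV::'i set) = card {a}" by simp
  thus False using assms by simp
qed

lemma Mmax_le: assumes "CARD('i::finite) \<ge> 2"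
  shows "Mmax m a \<le> Max (range (m::'i::finite\<Rightarrow>real))"
  unfolding Mmax_def
proof -
  have "UNIV - {a} \<noteq> {}" using other_ex[OF assms, of a] by auto
  show "Max (m ` (UNIV - {a})) \<le> Max (range m)"
    by (rule Max_mono) (use \<open>UNIV - {a} \<noteq> {}\<close> in auto)
qed



lemma exp_set_integral:
  fixes a c :: real assumes "a > 0"
  shows "set_integrable lborel {c..} (\<lambda>x. exp (-a*x))"
    and "(LINT x:{c..}|lborel. exp (-a*x)) = exp (-a*c)/a"
proof -
  have hk: "((\<lambda>x::real. exp (-a*x)) has_integral exp (-a*c)/a) {c..}"
    using has_integral_exp_minus_to_infinity[OF assms] .
  hence "(\<lambda>x::real. exp (-a*x)) integrable_on {c..}" by blast
  hence "(\<lambda>x::real. exp (-a*x)) absolutely_integrable_on {c..}"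
    by (rule nonnegative_absolutely_integrable_1) auto
  moreover have "(\<lambda>x. indicator {c..} x *\<^sub>R exp (-a*x)) \<in> borel_measurable lborel" by measurable
  ultimately show si: "set_integrable lborel {c..} (\<lambda>x. exp (-a*x))"
    unfolding set_integrable_def using integrable_completion by blast
  show "(LINT x:{c..}|lborel. exp (-a*x)) = exp (-a*c)/a"
    using set_borel_integral_eq_integral(2)[OF si] hk integral_unique by metis
qed

lemma exp_set_integral_K:
  fixes a c K :: real assumes "a > 0"
  shows "set_integrable lborel {c..} (\<lambda>x. K * exp (-a*x))"
    and "(LINT x:{c..}|lborel. K * exp (-a*x)) = K * exp (-a*c)/a"
  using exp_set_integral[OF assms, of c] by auto

lemma exp_split: fixes u b y :: real shows "exp (u - b*y) = exp u * exp (-b*y)"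
  using mult_exp_exp[of u "-b*y"] by simp

lemma nz2: "0<(\<nu>::real) \<Longrightarrow> \<nu> < 1 \<Longrightarrow> 1 + \<nu>*\<nu> \<noteq> \<nu>*2"
proof -
  assume "\<nu> < 1" hence "(1-\<nu>)*(1-\<nu>) > 0" by simp
  thus ?thesis by (simp add: algebra_simps)
qed

lemma xi_integral:
  fixes p q \<nu> :: real assumes nu: "0 < \<nu>" "\<nu> < 1"
  shows "set_integrable lborel {0..} (\<lambda>y. max (exp (p + ln \<nu> - \<nu>*y)) (exp (q - y)))"
    and "(LINT y:{0..}|lborel. max (exp (p + ln \<nu> - \<nu>*y)) (exp (q - y))) =
           (if q - p < ln \<nu> then exp p else exp q + hfun \<nu> * exp ((p - \<nu>*q)/(1-\<nu>)))"
proof -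
  define E1 where "E1 = (\<lambda>y. exp (p + ln \<nu>) * exp (-\<nu>*y))"
  define E2 where "E2 = (\<lambda>y::real. exp q * exp (-1*y))"
  have e1: "exp (p + ln \<nu> - \<nu>*y) = E1 y" for y unfolding E1_def by (rule exp_split)
  have e2: "exp (q - y) = E2 y" for y unfolding E2_def using exp_split[of q 1 y] by simp
  have i1: "set_integrable lborel {c..} E1" for c unfolding E1_def
    by (rule exp_set_integral_K) (use nu in auto)
  have i2: "set_integrable lborel {c..} E2" for c unfolding E2_def
    by (rule exp_set_integral_K) auto
  have v1: "(LINT y:{c..}|lborel. E1 y) = exp (p - \<nu>*c)" for c
  proof -
    have "(LINT y:{c..}|lborel. E1 y) = exp (p + ln \<nu>) * exp (-\<nu>*c) / \<nu>"
      unfolding E1_def by (rule exp_set_integral_K) (use nu in auto)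
    also have "\<dots> = exp p * exp (-\<nu>*c)" using nu by (simp add: exp_add)
    finally show ?thesis by (simp add: exp_split)
  qed
  have v2: "(LINT y:{c..}|lborel. E2 y) = exp (q - c)" for c
  proof -
    have "(LINT y:{c..}|lborel. E2 y) = exp q * exp (-1*c) / 1"
      unfolding E2_def by (rule exp_set_integral_K) auto
    thus ?thesis using exp_split[of q 1 c] by simp
  qed
  have meas: "set_borel_measurable lborel {c..} (\<lambda>y. max (E1 y) (E2 y))" for c :: real
    unfolding set_borel_measurable_def E1_def E2_def by measurable
  have imax: "set_integrable lborel {c..} (\<lambda>y. max (E1 y) (E2 y))" for c
  proof (rule set_integrable_bound[OF set_integral_add(1)[OF i1 i2] meas])
    show "AE x in lborel. x \<in> {c..} \<longrightarrow> norm (max (E1 x) (E2 x)) \<le> norm (E1 x + E2 x)"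
    proof (rule AE_I2)
      fix x have pos: "E1 x > 0" "E2 x > 0" unfolding E1_def E2_def by auto
      thus "x \<in> {c..} \<longrightarrow> norm (max (E1 x) (E2 x)) \<le> norm (E1 x + E2 x)" by (simp add: max_def)
    qed
  qed
  show "set_integrable lborel {0..} (\<lambda>y. max (exp (p + ln \<nu> - \<nu>*y)) (exp (q - y)))"
    unfolding e1 e2 by (rule imax)
  show "(LINT y:{0..}|lborel. max (exp (p + ln \<nu> - \<nu>*y)) (exp (q - y))) =
           (if q - p < ln \<nu> then exp p else exp q + hfun \<nu> * exp ((p - \<nu>*q)/(1-\<nu>)))"
  proof (cases "q - p < ln \<nu>")
    case True
    have "(LINT y:{0..}|lborel. max (E1 y) (E2 y)) = (LINT y:{0..}|lborel. E1 y)"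
    proof (rule set_lebesgue_integral_cong)
      show "\<forall>x. x \<in> {0..} \<longrightarrow> max (E1 x) (E2 x) = E1 x"
      proof (intro allI impI)
        fix x :: real assume "x \<in> {0..}"
        hence "(1-\<nu>)*x \<ge> 0" using nu by simp
        hence "q - x \<le> p + ln \<nu> - \<nu>*x" using True by (simp add: algebra_simps)
        hence "exp (q - x) \<le> exp (p + ln \<nu> - \<nu>*x)" by simp
        thus "max (E1 x) (E2 x) = E1 x" unfolding e1[symmetric] e2[symmetric] by simp
      qed
    qed simp
    thus ?thesis using True unfolding e1 e2 v1 by simp
  next
    case False
    define ys where "ys = (q - p - ln \<nu>)/(1-\<nu>)"
    have ys0: "ys \<ge> 0" unfolding ys_def using False nu by simp
    have ysm: "(1-\<nu>)*ys = q - p - ln \<nu>" unfolding ys_def using nu by simp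
    have U: "{0..} = {0..<ys} \<union> {ys..}" using ys0 by auto
    have d: "{0..<ys} \<inter> {ys..} = ({}::real set)" by auto
    have sub: "set_integrable lborel {0..<ys} f" if "set_integrable lborel {0..} f" for f :: "real \<Rightarrow> real"
      by (rule set_integrable_subset[OF that]) auto
    have "(LINT y:{0..}|lborel. max (E1 y) (E2 y)) =
          (LINT y:{0..<ys}|lborel. max (E1 y) (E2 y)) + (LINT y:{ys..}|lborel. max (E1 y) (E2 y))"
      unfolding U by (rule set_integral_Un[OF d sub[OF imax] imax])
    also have "(LINT y:{0..<ys}|lborel. max (E1 y) (E2 y)) = (LINT y:{0..<ys}|lborel. E2 y)"
    proof (rule set_lebesgue_integral_cong)
      show "\<forall>x. x \<in> {0..<ys} \<longrightarrow> max (E1 x) (E2 x) = E2 x"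
      proof (intro allI impI)
        fix x :: real assume "x \<in> {0..<ys}"
        hence "(1-\<nu>)*x \<le> (1-\<nu>)*ys" using nu by (intro mult_left_mono) auto
        hence "p + ln \<nu> - \<nu>*x \<le> q - x" using ysm by (simp add: algebra_simps)
        hence "exp (p + ln \<nu> - \<nu>*x) \<le> exp (q - x)" by simp
        thus "max (E1 x) (E2 x) = E2 x" unfolding e1[symmetric] e2[symmetric] by simp
      qed
    qed simp
    also have "(LINT y:{ys..}|lborel. max (E1 y) (E2 y)) = (LINT y:{ys..}|lborel. E1 y)"
    proof (rule set_lebesgue_integral_cong)
      show "\<forall>x. x \<in> {ys..} \<longrightarrow> max (E1 x) (E2 x) = E1 x"
      proof (intro allI impI)
        fix x :: real assume "x \<in> {ys..}"
        hence "(1-\<nu>)*x \<ge> (1-\<nu>)*ys" using nu by (intro mult_left_mono) auto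
        hence "q - x \<le> p + ln \<nu> - \<nu>*x" using ysm by (simp add: algebra_simps)
        hence "exp (q - x) \<le> exp (p + ln \<nu> - \<nu>*x)" by simp
        thus "max (E1 x) (E2 x) = E1 x" unfolding e1[symmetric] e2[symmetric] by simp
      qed
    qed simp
    also have "(LINT y:{0..<ys}|lborel. E2 y) = exp q - exp (q - ys)"
    proof -
      have "(LINT y:{0..}|lborel. E2 y) = (LINT y:{0..<ys}|lborel. E2 y) + (LINT y:{ys..}|lborel. E2 y)"
        unfolding U by (rule set_integral_Un[OF d sub[OF i2] i2])
      thus ?thesis unfolding v2 by simp
    qed
    also have "exp (q - ys) = exp ((p - \<nu>*q)/(1-\<nu>)) * exp (ln \<nu>/(1-\<nu>))"
    proof -
      have "q - ys = (p - \<nu>*q)/(1-\<nu>) + ln \<nu>/(1-\<nu>)" unfolding ys_def using nu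
        by (simp add: field_split_simps) (simp add: algebra_simps nz2)
      thus ?thesis by (simp add: exp_add)
    qed
    also have "(LINT y:{ys..}|lborel. E1 y) = exp (p - \<nu>*ys)" by (rule v1)
    also have "exp (p - \<nu>*ys) = exp ((p - \<nu>*q)/(1-\<nu>)) * exp (\<nu>/(1-\<nu>) * ln \<nu>)"
    proof -
      have "p - \<nu>*ys = (p - \<nu>*q)/(1-\<nu>) + \<nu>/(1-\<nu>) * ln \<nu>" unfolding ys_def using nu
        by (simp add: field_split_simps) (simp add: algebra_simps nz2)
      thus ?thesis by (simp add: exp_add)
    qed
    finally show ?thesis using False unfolding e1 e2 v1 hfun_def by (simp add: algebra_simps)
  qed
qed



lemma Max_sh: assumes "CARD('i::finite) \<ge> 2"
  shows "Max (range (sh (m::'i\<Rightarrow>real) a t)) = max (m a + t) (Mmax m a)"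
proof -
  have ne: "UNIV - {a} \<noteq> {}" using other_ex[OF assms, of a] by auto
  have r: "range (sh m a t) = insert (m a + t) (m ` (UNIV - {a}))"
  proof -
    have "range (sh m a t) = insert (sh m a t a) (sh m a t ` (UNIV - {a}))" by blast
    also have "sh m a t ` (UNIV - {a}) = m ` (UNIV - {a})"
      by (rule image_cong) (auto simp: sh_other)
    finally show ?thesis by simp
  qed
  show ?thesis unfolding r Mmax_def using ne by (subst Max_insert) auto
qed

lemma W0_line: assumes "0 < \<nu>" "CARD('i::finite) \<ge> 2"
  shows "Wrem \<nu> 0 (sh (m::'i\<Rightarrow>real) a (Jfun \<nu> y)) * fdens \<nu> m a y
     = max (exp (m a + ln \<nu> - \<nu>*y)) (exp (Mmax m a - y)) / Zsum m"
proof -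
  have Z: "Zsum (sh m a (Jfun \<nu> y)) > 0" "Zsum m > 0" by (rule Zsum_pos)+
  have "exp (max (m a + Jfun \<nu> y) (Mmax m a)) * exp (-y) = exp (max (m a + Jfun \<nu> y) (Mmax m a) - y)"
    using mult_exp_exp[of _ "-y"] by simp
  also have "max (m a + Jfun \<nu> y) (Mmax m a) - y = max (m a + ln \<nu> - \<nu>*y) (Mmax m a - y)"
    unfolding Jfun_def by (simp add: max_def algebra_simps)
  also have "exp (max (m a + ln \<nu> - \<nu>*y) (Mmax m a - y)) = max (exp (m a + ln \<nu> - \<nu>*y)) (exp (Mmax m a - y))"
    by (simp add: max_def)
  finally have e: "exp (max (m a + Jfun \<nu> y) (Mmax m a)) * exp (-y) = max (exp (m a + ln \<nu> - \<nu>*y)) (exp (Mmax m a - y))" .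
  show ?thesis unfolding W0_eq fdens_eq[OF assms(1)] Max_sh[OF assms(2)]
    using Z e by (simp add: field_simps)
qed

lemma Q0: assumes "0 < \<nu>" "\<nu> < 1" "CARD('i::finite) \<ge> 2"
  shows "set_integrable lborel {0..} (\<lambda>y. Wrem \<nu> 0 (sh (m::'i\<Rightarrow>real) a (Jfun \<nu> y)) * fdens \<nu> m a y)"
    and "(LINT y:{0..}|lborel. Wrem \<nu> 0 (sh m a (Jfun \<nu> y)) * fdens \<nu> m a y) = xi \<nu> a m / Zsum m"
proof -
  have f: "(\<lambda>y. Wrem \<nu> 0 (sh m a (Jfun \<nu> y)) * fdens \<nu> m a y)
     = (\<lambda>y. max (exp (m a + ln \<nu> - \<nu>*y)) (exp (Mmax m a - y)) / Zsum m)"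
    by (rule ext) (rule W0_line[OF assms(1,3)])
  show "set_integrable lborel {0..} (\<lambda>y. Wrem \<nu> 0 (sh m a (Jfun \<nu> y)) * fdens \<nu> m a y)"
    unfolding f using xi_integral(1)[OF assms(1,2)] by (intro set_integrable_divide) auto
  show "(LINT y:{0..}|lborel. Wrem \<nu> 0 (sh m a (Jfun \<nu> y)) * fdens \<nu> m a y) = xi \<nu> a m / Zsum m"
    unfolding f set_integral_divide_zero xi_integral(2)[OF assms(1,2)] xi_def by simp
qed



definition Pn :: "real \<Rightarrow> real" where "Pn \<nu> = exp (\<nu>/(1-\<nu>) * ln \<nu>)"

lemma Pn_pos: "Pn \<nu> > 0" unfolding Pn_def by simp

lemma exp_ln_frac: assumes "0 < \<nu>" "\<nu> < 1" shows "exp (ln \<nu>/(1-\<nu>)) = \<nu> * Pn \<nu>"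
proof -
  have "ln \<nu>/(1-\<nu>) = ln \<nu> + \<nu>/(1-\<nu>) * ln \<nu>" using assms
    by (simp add: field_split_simps)
  thus ?thesis unfolding Pn_def using assms by (simp add: exp_add)
qed

lemma hfun_eq: assumes "0 < \<nu>" "\<nu> < 1" shows "hfun \<nu> = (1-\<nu>) * Pn \<nu>"
  unfolding hfun_def exp_ln_frac[OF assms] by (simp add: Pn_def algebra_simps)

lemma hfun_pos: assumes "0 < \<nu>" "\<nu> < 1" shows "hfun \<nu> > 0"
  unfolding hfun_eq[OF assms] using assms Pn_pos[of \<nu>] by simp

lemma gfun_pos: assumes "0 < \<nu>" "\<nu> < 1" shows "gfun \<nu> > 0"
proof -
  have "ln \<nu> < 0" using assms by simp
  hence "ln \<nu>/(1-\<nu>) < 0" using assms by (simp add: divide_neg_pos)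
  hence "1/(1+\<nu>) - ln \<nu>/(1-\<nu>) > 0" using assms by (smt (verit) divide_pos_pos)
  thus ?thesis unfolding gfun_def by simp
qed

lemma R2: assumes nu: "0 < \<nu>" "\<nu> < 1" and d: "0 \<le> d" "d \<le> - ln \<nu>"
  shows "exp (-d) + hfun \<nu> * exp (\<nu>*d/(1-\<nu>)) \<le> 1 + hfun \<nu>"
proof -
  define D where "D = - ln \<nu>"
  have D0: "D > 0" unfolding D_def using nu by simp
  define s where "s = d / D"
  have dD: "d \<le> D" unfolding D_def using d by simp
  have s: "0 \<le> s" "s \<le> 1" unfolding s_def using D0 d(1) dD by auto
  have ds: "d = s * D" unfolding s_def using D0 by simp
  have c1: "exp ((1 - s) *\<^sub>R 0 + s *\<^sub>R (-D)) \<le> (1 - s) * exp 0 + s * exp (-D)"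
    by (rule convex_onD[OF exp_convex]) (use s in auto)
  hence e1: "exp (-d) \<le> (1 - s) + s * \<nu>" unfolding ds D_def using nu by simp
  have c2: "exp ((1 - s) *\<^sub>R 0 + s *\<^sub>R (\<nu>*D/(1-\<nu>))) \<le> (1 - s) * exp 0 + s * exp (\<nu>*D/(1-\<nu>))"
    by (rule convex_onD[OF exp_convex]) (use s in auto)
  have "exp (\<nu>*D/(1-\<nu>)) * Pn \<nu> = 1"
    unfolding Pn_def D_def using mult_exp_exp[of "\<nu>*(-ln \<nu>)/(1-\<nu>)" "\<nu>/(1-\<nu>) * ln \<nu>"] by simp
  hence eP: "exp (\<nu>*D/(1-\<nu>)) = 1 / Pn \<nu>" using Pn_pos[of \<nu>] by (simp add: field_simps)
  have nd: "\<nu>*d = s*(\<nu>*D)" by (simp add: ds algebra_simps)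
  have eqe: "(1 - s) *\<^sub>R 0 + s *\<^sub>R (\<nu>*D/(1-\<nu>)) = \<nu>*d/(1-\<nu>)" unfolding nd by simp
  have "exp (\<nu>*d/(1-\<nu>)) \<le> (1 - s) * exp 0 + s * exp (\<nu>*D/(1-\<nu>))" using c2 unfolding eqe .
  hence e2: "exp (\<nu>*d/(1-\<nu>)) \<le> (1 - s) + s / Pn \<nu>" using eP by simp
  have h0: "hfun \<nu> \<ge> 0" using hfun_pos[OF nu] by simp
  have "hfun \<nu> * exp (\<nu>*d/(1-\<nu>)) \<le> hfun \<nu> * ((1 - s) + s / Pn \<nu>)"
    by (rule mult_left_mono[OF e2 h0])
  also have "\<dots> = hfun \<nu> * (1 - s) + s * (1 - \<nu>)"
    unfolding hfun_eq[OF nu] using Pn_pos[of \<nu>] by (simp add: field_simps)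
  finally have "hfun \<nu> * exp (\<nu>*d/(1-\<nu>)) \<le> hfun \<nu> * (1 - s) + s * (1 - \<nu>)" .
  moreover have "hfun \<nu> * (1 - s) \<le> hfun \<nu>" using h0 s by (simp add: mult_left_le)
  moreover have "s * (1 - \<nu>) = s - s * \<nu>" by (simp add: algebra_simps)
  ultimately show ?thesis using e1 s by linarith
qed

lemma R1: assumes nu: "0 < \<nu>" "\<nu> < 1" and d: "0 \<le> d" "d \<le> - ln \<nu>"
  shows "1 + hfun \<nu> * exp (d/(1-\<nu>)) \<le> exp d + hfun \<nu> * exp (-\<nu>*d/(1-\<nu>))"
proof -
  define u where "u = exp d"
  have u1: "1 \<le> u" unfolding u_def using d by simp
  have uv: "u \<le> 1/\<nu>" unfolding u_def using d nu
    by (metis exp_ln exp_minus exp_le_cancel_iff inverse_eq_divide ln_inverse)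
  have h0: "hfun \<nu> \<ge> 0" using hfun_pos[OF nu] by simp
  have "exp (-\<nu>*d/(1-\<nu>)) \<ge> 1 + (-\<nu>*d/(1-\<nu>))" by (rule exp_ge_add_one_self)
  moreover have "d \<le> u - 1" unfolding u_def using exp_ge_add_one_self[of d] by linarith
  hence "\<nu>*d/(1-\<nu>) \<le> \<nu>*(u-1)/(1-\<nu>)" using nu by (intro divide_right_mono mult_left_mono) auto
  ultimately have tan: "exp (-\<nu>*d/(1-\<nu>)) \<ge> 1 - \<nu>*(u-1)/(1-\<nu>)" by simp
  \<comment> \<open>chord bound\<close>
  define s where "s = (u - 1) * \<nu> / (1 - \<nu>)"
  have s: "0 \<le> s" "s \<le> 1" unfolding s_def using u1 uv nu by (auto simp: field_simps)
  have us1: "s * (1/\<nu>) - s = s * ((1-\<nu>)/\<nu>)" using nu by (simp add: field_simps)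
  have us2: "s * ((1-\<nu>)/\<nu>) = u - 1" unfolding s_def using nu by (simp add: field_simps)
  have us: "u = (1 - s) * 1 + s * (1/\<nu>)" using us1 us2 by simp
  have al: "1/(1-\<nu>) \<ge> 1" using nu by simp
  have c: "((1 - s) *\<^sub>R 1 + s *\<^sub>R (1/\<nu>)) powr (1/(1-\<nu>)) \<le> (1 - s) * 1 powr (1/(1-\<nu>)) + s * (1/\<nu>) powr (1/(1-\<nu>))"
    by (rule convex_onD[OF powr_convex[OF al]]) (use s nu in auto)
  have "(1/\<nu>) powr (1/(1-\<nu>)) = exp (- (ln \<nu>/(1-\<nu>)))"
    using nu by (simp add: powr_def ln_div)
  also have "\<dots> = 1 / (\<nu> * Pn \<nu>)" unfolding exp_minus exp_ln_frac[OF nu] by (simp add: field_simps)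
  finally have pv: "(1/\<nu>) powr (1/(1-\<nu>)) = 1 / (\<nu> * Pn \<nu>)" .
  have "exp (d/(1-\<nu>)) = u powr (1/(1-\<nu>))" unfolding u_def powr_def by simp
  hence ch: "exp (d/(1-\<nu>)) \<le> (1 - s) + s / (\<nu> * Pn \<nu>)" using c pv us by simp
  have "hfun \<nu> * exp (d/(1-\<nu>)) \<le> hfun \<nu> * ((1 - s) + s / (\<nu> * Pn \<nu>))"
    by (rule mult_left_mono[OF ch h0])
  also have "\<dots> = hfun \<nu> - hfun \<nu> * s + hfun \<nu> * (s / (\<nu> * Pn \<nu>))"
    by (simp add: algebra_simps)
  also have "hfun \<nu> * (s / (\<nu> * Pn \<nu>)) = u - 1"
    unfolding hfun_eq[OF nu] s_def using Pn_pos[of \<nu>] nu by (simp add: field_simps)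
  finally have A: "hfun \<nu> * exp (d/(1-\<nu>)) \<le> hfun \<nu> - hfun \<nu> * s + (u - 1)" .
  have "hfun \<nu> * (1 - \<nu>*(u-1)/(1-\<nu>)) \<le> hfun \<nu> * exp (-\<nu>*d/(1-\<nu>))"
    by (rule mult_left_mono[OF tan h0])
  moreover have "hfun \<nu> * (1 - \<nu>*(u-1)/(1-\<nu>)) = hfun \<nu> - hfun \<nu> * s"
    unfolding s_def using nu by (simp add: field_simps)
  ultimately have B: "hfun \<nu> - hfun \<nu> * s \<le> hfun \<nu> * exp (-\<nu>*d/(1-\<nu>))" by simp
  show ?thesis using A B unfolding u_def by simp
qed



lemma Mmax_eq: assumes "a \<noteq> x1" "\<forall>y. (m::'i::finite\<Rightarrow>real) y \<le> m x1" shows "Mmax m a = m x1"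
  unfolding Mmax_def by (rule Max_eqI) (use assms in auto)

lemma minpair_fin: "finite {(m::'i::finite\<Rightarrow>real) xi - \<nu> * m xj | xi xj. xi \<noteq> xj}"
proof -
  have "{m xi - \<nu> * m xj | xi xj. xi \<noteq> xj} = (\<lambda>(i,j). m i - \<nu> * m j) ` {(i,j). i \<noteq> j}" by auto
  thus ?thesis by simp
qed

lemma minpair_le: "i \<noteq> j \<Longrightarrow> minpair \<nu> (m::'i::finite\<Rightarrow>real) \<le> m i - \<nu> * m j"
  unfolding minpair_def by (rule Min_le[OF minpair_fin]) auto

lemma minpair_sh: assumes "CARD('i::finite) \<ge> 2" "0 < \<nu>"
  shows "minpair \<nu> m + min t (-\<nu>*t) \<le> minpair \<nu> (sh (m::'i\<Rightarrow>real) a t)"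
proof -
  obtain b where b: "b \<noteq> a" using other_ex[OF assms(1)] by blast
  show ?thesis unfolding minpair_def[of _ "sh m a t"]
  proof (rule Min.boundedI[OF minpair_fin])
    show "{sh m a t xi - \<nu> * sh m a t xj |xi xj. xi \<noteq> xj} \<noteq> {}" using b by blast
    fix x assume "x \<in> {sh m a t xi - \<nu> * sh m a t xj |xi xj. xi \<noteq> xj}"
    then obtain i j where ij: "i \<noteq> j" "x = sh m a t i - \<nu> * sh m a t j" by blast
    have base: "minpair \<nu> m \<le> m i - \<nu> * m j" by (rule minpair_le[OF ij(1)])
    show "minpair \<nu> m + min t (-\<nu>*t) \<le> x"
    proof (cases "i = a")
      case True
      hence "j \<noteq> a" using ij by simp
      thus ?thesis using ij base True by (simp add: sh_other)
    next
      case False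
      show ?thesis
      proof (cases "j = a")
        case True
        thus ?thesis using ij base False by (simp add: sh_other algebra_simps)
      next
        case False2: False
        have "min t (-\<nu>*t) \<le> 0"
        proof (cases "t \<ge> 0")
          case True hence "\<nu>*t \<ge> 0" using assms(2) by simp
          thus ?thesis by simp
        qed simp
        thus ?thesis using ij base False False2 by (simp add: sh_other)
      qed
    qed
  qed
qed

lemma xi_le: assumes card: "CARD('i::finite) \<ge> 2" and nu: "0 < \<nu>" "\<nu> < 1"
  shows "xi \<nu> a (m::'i\<Rightarrow>real) \<le> (1 + hfun \<nu>) * exp (Max (range m))"
proof -
  define M where "M = Max (range m)"
  define q where "q = Mmax m a"
  have qM: "q \<le> M" unfolding q_def M_def by (rule Mmax_le[OF card])
  have aM: "m a \<le> M" unfolding M_def by (rule Max_range_ge)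
  have h0: "hfun \<nu> > 0" by (rule hfun_pos[OF nu])
  show ?thesis
  proof (cases "q - m a < ln \<nu>")
    case True
    hence "xi \<nu> a m = exp (m a)" unfolding xi_def q_def by simp
    also have "\<dots> \<le> exp M" using aM by simp
    also have "\<dots> \<le> (1 + hfun \<nu>) * exp M" using h0 by simp
    finally show ?thesis unfolding M_def .
  next
    case False
    hence xe: "xi \<nu> a m = exp q + hfun \<nu> * exp ((m a - \<nu>*q)/(1-\<nu>))" unfolding xi_def q_def by simp
    show ?thesis
    proof (cases "m a \<le> q")
      case True
      have "m a - \<nu>*q \<le> (1-\<nu>)*q" using True by (simp add: algebra_simps)
      hence "(m a - \<nu>*q)/(1-\<nu>) \<le> q" using nu by (simp add: divide_simps mult.commute)
      hence "exp ((m a - \<nu>*q)/(1-\<nu>)) \<le> exp M" using qM by simp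
      hence "hfun \<nu> * exp ((m a - \<nu>*q)/(1-\<nu>)) \<le> hfun \<nu> * exp M" using h0 by simp
      moreover have "exp q \<le> exp M" using qM by simp
      moreover have "(1 + hfun \<nu>)*exp M = exp M + hfun \<nu> * exp M" by (simp add: algebra_simps)
      ultimately show ?thesis unfolding xe M_def[symmetric] by linarith
    next
      case False2: False
      define d where "d = m a - q"
      have d: "0 \<le> d" "d \<le> - ln \<nu>" unfolding d_def using False False2 by auto
      have r2: "exp (-d) + hfun \<nu> * exp (\<nu>*d/(1-\<nu>)) \<le> 1 + hfun \<nu>" by (rule R2[OF nu d])
      have "exp (m a) * (exp (-d) + hfun \<nu> * exp (\<nu>*d/(1-\<nu>))) \<le> exp (m a) * (1 + hfun \<nu>)"
        by (rule mult_left_mono[OF r2]) simp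
      moreover have "exp (m a) * exp (-d) = exp q" unfolding d_def using mult_exp_exp[of "m a" "-(m a - q)"] by simp
      moreover have "exp (m a) * exp (\<nu>*d/(1-\<nu>)) = exp ((m a - \<nu>*q)/(1-\<nu>))"
      proof -
        have "m a + \<nu>*d/(1-\<nu>) = (m a - \<nu>*q)/(1-\<nu>)" unfolding d_def using nu
          by (simp add: field_split_simps; simp add: algebra_simps)
        thus ?thesis using mult_exp_exp[of "m a" "\<nu>*d/(1-\<nu>)"] by simp
      qed
      moreover have "exp (m a) \<le> exp M" using aM by simp
      ultimately have "xi \<nu> a m \<le> (1 + hfun \<nu>) * exp (m a)" unfolding xe by (simp add: algebra_simps)
      also have "\<dots> \<le> (1 + hfun \<nu>) * exp M" using aM h0 by simp
      finally show ?thesis unfolding M_def .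
    qed
  qed
qed

lemma xi_ge: assumes nu: "0 < \<nu>" "\<nu> < 1" and x1: "\<forall>y. (m::'i::finite\<Rightarrow>real) y \<le> m x1" and b: "b \<noteq> x1"
  shows "exp (m x1) + hfun \<nu> * exp (minpair \<nu> m / (1-\<nu>)) \<le> xi \<nu> b m"
proof -
  have Mb: "Mmax m b = m x1" by (rule Mmax_eq[OF b x1])
  have "\<not> (m x1 - m b < ln \<nu>)" using x1 nu by (smt (verit) ln_less_zero)
  hence xe: "xi \<nu> b m = exp (m x1) + hfun \<nu> * exp ((m b - \<nu> * m x1)/(1-\<nu>))" unfolding xi_def Mb by simp
  have "minpair \<nu> m \<le> m b - \<nu> * m x1" by (rule minpair_le[OF b])
  hence "minpair \<nu> m / (1-\<nu>) \<le> (m b - \<nu> * m x1)/(1-\<nu>)" using nu by (simp add: divide_right_mono)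
  hence "exp (minpair \<nu> m / (1-\<nu>)) \<le> exp ((m b - \<nu> * m x1)/(1-\<nu>))" by simp
  thus ?thesis unfolding xe using hfun_pos[OF nu] by simp
qed

lemma xi_x2: assumes nu: "0 < \<nu>" "\<nu> < 1" and x12: "x1 \<noteq> x2" and x1: "\<forall>y. (m::'i::finite\<Rightarrow>real) y \<le> m x1"
  and x2: "\<forall>y. y \<noteq> x1 \<longrightarrow> m y \<le> m x2"
  shows "xi \<nu> a m \<le> xi \<nu> x2 m"
proof -
  have h0: "hfun \<nu> > 0" by (rule hfun_pos[OF nu])
  have l0: "ln \<nu> < 0" using nu by simp
  have xe: "xi \<nu> b m = exp (m x1) + hfun \<nu> * exp ((m b - \<nu> * m x1)/(1-\<nu>))" if "b \<noteq> x1" for b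
  proof -
    have Mb: "Mmax m b = m x1" by (rule Mmax_eq[OF that x1])
    have "\<not> (m x1 - m b < ln \<nu>)" using x1 l0 by (smt (verit))
    thus ?thesis unfolding xi_def Mb by simp
  qed
  show ?thesis
  proof (cases "a = x1")
    case False
    have "m a \<le> m x2" using x2 False by simp
    hence "(m a - \<nu> * m x1)/(1-\<nu>) \<le> (m x2 - \<nu> * m x1)/(1-\<nu>)" using nu by (simp add: divide_right_mono)
    hence "exp ((m a - \<nu> * m x1)/(1-\<nu>)) \<le> exp ((m x2 - \<nu> * m x1)/(1-\<nu>))" by simp
    thus ?thesis unfolding xe[OF False] xe[OF x12[symmetric]] using h0 by simp
  next
    case True
    have M1: "Mmax m x1 = m x2" unfolding Mmax_def by (rule Max_eqI) (use x2 x12 in auto)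
    show ?thesis
    proof (cases "m x2 - m x1 < ln \<nu>")
      case True2: True
      hence "xi \<nu> a m = exp (m x1)" unfolding True xi_def M1 by simp
      thus ?thesis unfolding xe[OF x12[symmetric]] using h0 by simp
    next
      case False2: False
      hence xa: "xi \<nu> a m = exp (m x2) + hfun \<nu> * exp ((m x1 - \<nu> * m x2)/(1-\<nu>))"
        unfolding True xi_def M1 by simp
      define d where "d = m x1 - m x2"
      have d: "0 \<le> d" "d \<le> - ln \<nu>" unfolding d_def using False2 x1 by auto
      have r1: "1 + hfun \<nu> * exp (d/(1-\<nu>)) \<le> exp d + hfun \<nu> * exp (-\<nu>*d/(1-\<nu>))" by (rule R1[OF nu d])
      have "exp (m x2) * (1 + hfun \<nu> * exp (d/(1-\<nu>))) \<le> exp (m x2) * (exp d + hfun \<nu> * exp (-\<nu>*d/(1-\<nu>)))"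
        by (rule mult_left_mono[OF r1]) simp
      moreover have "exp (m x2) * exp (d/(1-\<nu>)) = exp ((m x1 - \<nu> * m x2)/(1-\<nu>))"
      proof -
        have "m x2 + d/(1-\<nu>) = (m x1 - \<nu> * m x2)/(1-\<nu>)" unfolding d_def using nu
          by (simp add: field_split_simps; simp add: algebra_simps)
        thus ?thesis using mult_exp_exp[of "m x2" "d/(1-\<nu>)"] by simp
      qed
      moreover have "exp (m x2) * exp (-\<nu>*d/(1-\<nu>)) = exp ((m x2 - \<nu> * m x1)/(1-\<nu>))"
      proof -
        have "m x2 + -\<nu>*d/(1-\<nu>) = (m x2 - \<nu> * m x1)/(1-\<nu>)" unfolding d_def using nu
          by (simp add: field_split_simps; simp add: algebra_simps)
        thus ?thesis using mult_exp_exp[of "m x2" "-\<nu>*d/(1-\<nu>)"] by simp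
      qed
      moreover have "exp (m x2) * exp d = exp (m x1)" unfolding d_def using mult_exp_exp[of "m x2" "m x1 - m x2"] by simp
      ultimately show ?thesis unfolding xa xe[OF x12[symmetric]] by (simp add: algebra_simps)
    qed
  qed
qed



lemma psi_integral: assumes nu: "0 < \<nu>" "\<nu> < 1"
  shows "set_integrable lborel {0..} (\<lambda>y. exp (min (Jfun \<nu> y) (-\<nu> * Jfun \<nu> y) / (1-\<nu>) - y))"
    and "(LINT y:{0..}|lborel. exp (min (Jfun \<nu> y) (-\<nu> * Jfun \<nu> y) / (1-\<nu>) - y)) = gfun \<nu>"
proof -
  define \<psi> where "\<psi> = (\<lambda>y. exp (min (Jfun \<nu> y) (-\<nu> * Jfun \<nu> y) / (1-\<nu>) - y))"
  define y0 where "y0 = - ln \<nu> / (1-\<nu>)"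
  define c1 where "c1 = exp (ln \<nu>/(1-\<nu>))"
  define c2 where "c2 = exp (-\<nu> * ln \<nu>/(1-\<nu>))"
  have y00: "y0 > 0" unfolding y0_def using nu by (simp add: divide_neg_pos)
  have Jy0: "(1-\<nu>)*y0 + ln \<nu> = 0" unfolding y0_def using nu by simp
  have p1: "\<psi> y = c1" if "y \<in> {0..<y0}" for y
  proof -
    have "(1-\<nu>)*y < (1-\<nu>)*y0" using that nu by simp
    hence J: "Jfun \<nu> y < 0" unfolding Jfun_def using Jy0 by simp
    hence "min (Jfun \<nu> y) (-\<nu> * Jfun \<nu> y) = Jfun \<nu> y" using nu
      by (simp add: min_def mult_neg_neg) (smt (verit) mult_pos_neg)
    moreover have "Jfun \<nu> y / (1-\<nu>) - y = ln \<nu>/(1-\<nu>)" unfolding Jfun_def using nu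
      by (simp add: field_split_simps)
    ultimately show ?thesis unfolding \<psi>_def c1_def by simp
  qed
  have p2: "\<psi> y = c2 * exp (-(1+\<nu>)*y)" if "y \<in> {y0..}" for y
  proof -
    have "(1-\<nu>)*y \<ge> (1-\<nu>)*y0" using that nu by simp
    hence J: "Jfun \<nu> y \<ge> 0" unfolding Jfun_def using Jy0 by simp
    hence "min (Jfun \<nu> y) (-\<nu> * Jfun \<nu> y) = -\<nu> * Jfun \<nu> y" using nu
      by (simp add: min_def) (smt (verit) mult_nonneg_nonneg)
    moreover have "-\<nu> * Jfun \<nu> y / (1-\<nu>) - y = -\<nu> * ln \<nu>/(1-\<nu>) + (-(1+\<nu>)*y)" unfolding Jfun_def using nu
      by (simp add: field_split_simps; simp add: algebra_simps)
    ultimately have "\<psi> y = exp (-\<nu> * ln \<nu>/(1-\<nu>) + (-(1+\<nu>)*y))" unfolding \<psi>_def by simp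
    thus ?thesis unfolding c2_def exp_add .
  qed
  have i1: "set_integrable lborel {0..<y0} \<psi>"
  proof -
    have "set_integrable lborel {0..<y0} (\<lambda>_. c1)"
      unfolding set_integrable_def by (rule integrable_indicator) (use y00 in auto)
    thus ?thesis using set_integrable_cong[of lborel lborel "{0..<y0}" "{0..<y0}" \<psi> "\<lambda>_. c1"] p1 by simp
  qed
  have i2': "set_integrable lborel {y0..} (\<lambda>y. c2 * exp (-(1+\<nu>)*y))"
    by (rule exp_set_integral_K) (use nu in simp)
  have i2: "set_integrable lborel {y0..} \<psi>"
    using set_integrable_cong[of lborel lborel "{y0..}" "{y0..}" \<psi>] p2 i2' by simp
  have U: "{0..} = {0..<y0} \<union> {y0..}" using y00 by auto
  show "set_integrable lborel {0..} (\<lambda>y. exp (min (Jfun \<nu> y) (-\<nu> * Jfun \<nu> y) / (1-\<nu>) - y))"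
    unfolding \<psi>_def[symmetric] U by (rule set_integrable_Un[OF i1 i2]) auto
  have "(LINT y:{0..}|lborel. \<psi> y) = (LINT y:{0..<y0}|lborel. \<psi> y) + (LINT y:{y0..}|lborel. \<psi> y)"
    unfolding U by (rule set_integral_Un[OF _ i1 i2]) auto
  also have "(LINT y:{0..<y0}|lborel. \<psi> y) = (LINT y:{0..<y0}|lborel. c1)"
    by (rule set_lebesgue_integral_cong) (use p1 in auto)
  also have "\<dots> = y0 * c1" using y00 by (subst set_integral_const) auto
  also have "(LINT y:{y0..}|lborel. \<psi> y) = (LINT y:{y0..}|lborel. c2 * exp (-(1+\<nu>)*y))"
    by (rule set_lebesgue_integral_cong) (use p2 in auto)
  also have "\<dots> = c2 * exp (-(1+\<nu>)*y0) / (1+\<nu>)" by (rule exp_set_integral_K) (use nu in simp)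
  also have "c2 * exp (-(1+\<nu>)*y0) = c1"
  proof -
    have "-\<nu> * ln \<nu>/(1-\<nu>) + (-(1+\<nu>)*y0) = ln \<nu>/(1-\<nu>)" unfolding y0_def using nu
      by (simp add: field_split_simps; simp add: algebra_simps)
    thus ?thesis unfolding c1_def c2_def using mult_exp_exp[of "-\<nu> * ln \<nu>/(1-\<nu>)" "-(1+\<nu>)*y0"] by simp
  qed
  also have "y0 * c1 + c1 / (1+\<nu>) = gfun \<nu>" unfolding gfun_def c1_def y0_def by (simp add: algebra_simps)
  finally show "(LINT y:{0..}|lborel. exp (min (Jfun \<nu> y) (-\<nu> * Jfun \<nu> y) / (1-\<nu>) - y)) = gfun \<nu>"
    unfolding \<psi>_def .
qed

lemma set_integral_mono':
  fixes f g :: "real \<Rightarrow> real"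
  assumes "set_integrable lborel A f" "\<And>x. x \<in> A \<Longrightarrow> g x \<le> f x" "\<And>x. x \<in> A \<Longrightarrow> 0 \<le> f x"
  shows "(LINT x:A|lborel. g x) \<le> (LINT x:A|lborel. f x)"
  using assms unfolding set_integrable_def set_lebesgue_integral_def
  by (intro integral_mono') (auto split: split_indicator)

lemma set_integral_nonneg':
  fixes f :: "real \<Rightarrow> real"
  assumes "\<And>x. x \<in> A \<Longrightarrow> 0 \<le> f x"
  shows "0 \<le> (LINT x:A|lborel. f x)"
  unfolding set_lebesgue_integral_def using assms
  by (intro Bochner_Integration.integral_nonneg) (auto split: split_indicator)

lemma Max_range_le: "(\<And>b. (f::'i::finite\<Rightarrow>real) b \<le> c) \<Longrightarrow> Max (range f) \<le> c"
  by (simp add: Max_le_iff)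

lemma W0_le1: "Wrem \<nu> 0 (m::'i::finite\<Rightarrow>real) \<le> 1"
  by (simp add: Max_range_le pa_bounds)

lemma W_nonneg: assumes "0 < \<nu>" shows "0 \<le> Wrem \<nu> n (m::'i::finite\<Rightarrow>real)"
proof (induction n arbitrary: m)
  case 0
  show ?case unfolding Wrem.simps by (rule order_trans[OF less_imp_le[OF pa_bounds(1)] Max_range_ge])
next
  case (Suc k)
  have "0 \<le> (LINT y:{0..}|lborel. Wrem \<nu> k (\<lambda>x. m x + Jfun \<nu> y * deltav undefined x) * fdens \<nu> m undefined y)"
    by (rule set_integral_nonneg', rule mult_nonneg_nonneg) (use Suc fdens_nonneg[OF assms] in auto)
  thus ?case unfolding Wrem.simps by (rule order_trans) (rule Max_range_ge)
qed



definition Qf :: "real \<Rightarrow> nat \<Rightarrow> ('i::finite \<Rightarrow> real) \<Rightarrow> 'i \<Rightarrow> real" where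
  "Qf \<nu> n m a = (LINT y:{0..}|lborel. Wrem \<nu> n (sh m a (Jfun \<nu> y)) * fdens \<nu> m a y)"

lemma Wrem_Suc: "Wrem \<nu> (Suc n) m = Max (range (Qf \<nu> n (m::'i::finite\<Rightarrow>real)))"
  by (simp add: Qf_def sh_def)

lemma qfun_eq: "k < L \<Longrightarrow> qfun \<nu> L k m a = Qf \<nu> (L - k - 1) (m::'i::finite\<Rightarrow>real) a"
  unfolding qfun_def Qf_def Vstar_def sh_def by (simp add: diff_diff_add)

lemma Vstar_eq: "k < L \<Longrightarrow> Vstar \<nu> L k m = Max (range (Qf \<nu> (L - k - 1) (m::'i::finite\<Rightarrow>real)))"
proof -
  assume "k < L" hence "L - k = Suc (L - k - 1)" by simp
  thus ?thesis unfolding Vstar_def using Wrem_Suc[of \<nu> "L - k - 1" m] by simp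
qed

context
  fixes \<nu> :: real
  assumes card: "CARD('i::finite) \<ge> 2" and nu: "0 < \<nu>" "\<nu> < 1"
begin

lemma Q_ub_from:
  assumes W: "\<And>m'::'i\<Rightarrow>real. Wrem \<nu> n m' \<le> (1 + hfun \<nu>)^n * Wrem \<nu> 0 m'"
  shows "Qf \<nu> n (m::'i\<Rightarrow>real) a \<le> (1 + hfun \<nu>)^n * xi \<nu> a m / Zsum m"
proof -
  have h0: "0 \<le> (1 + hfun \<nu>)^n" using hfun_pos[OF nu] by simp
  have "Qf \<nu> n m a \<le> (LINT y:{0..}|lborel. (1 + hfun \<nu>)^n * (Wrem \<nu> 0 (sh m a (Jfun \<nu> y)) * fdens \<nu> m a y))"
    unfolding Qf_def
  proof (rule set_integral_mono')
    show "set_integrable lborel {0..} (\<lambda>y. (1 + hfun \<nu>)^n * (Wrem \<nu> 0 (sh m a (Jfun \<nu> y)) * fdens \<nu> m a y))"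
      using Q0(1)[OF nu card] by auto
    fix y
    have f0: "0 \<le> fdens \<nu> m a y" by (rule fdens_nonneg[OF nu(1)])
    have w0: "0 \<le> Wrem \<nu> 0 (sh m a (Jfun \<nu> y))" by (rule W_nonneg[OF nu(1)])
    show "0 \<le> (1 + hfun \<nu>)^n * (Wrem \<nu> 0 (sh m a (Jfun \<nu> y)) * fdens \<nu> m a y)"
      using h0 f0 w0 by simp
    have "Wrem \<nu> n (sh m a (Jfun \<nu> y)) * fdens \<nu> m a y \<le> ((1 + hfun \<nu>)^n * Wrem \<nu> 0 (sh m a (Jfun \<nu> y))) * fdens \<nu> m a y"
      by (rule mult_right_mono[OF W f0])
    thus "Wrem \<nu> n (sh m a (Jfun \<nu> y)) * fdens \<nu> m a y \<le> (1 + hfun \<nu>)^n * (Wrem \<nu> 0 (sh m a (Jfun \<nu> y)) * fdens \<nu> m a y)"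
      by (simp add: mult.assoc)
  qed
  also have "\<dots> = (1 + hfun \<nu>)^n * xi \<nu> a m / Zsum m"
    using Q0(2)[OF nu card] by simp
  finally show ?thesis .
qed

lemma W_ub: "Wrem \<nu> n (m::'i\<Rightarrow>real) \<le> (1 + hfun \<nu>)^n * Wrem \<nu> 0 m"
proof (induction n arbitrary: m)
  case 0 thus ?case by simp
next
  case (Suc n)
  have Z: "Zsum m > 0" by (rule Zsum_pos)
  have h0: "0 \<le> (1 + hfun \<nu>)^n" using hfun_pos[OF nu] by simp
  show ?case unfolding Wrem_Suc
  proof (rule Max_range_le)
    fix a
    have "Qf \<nu> n m a \<le> (1 + hfun \<nu>)^n * xi \<nu> a m / Zsum m" by (rule Q_ub_from[OF Suc.IH])
    also have "\<dots> \<le> (1 + hfun \<nu>)^n * ((1 + hfun \<nu>) * exp (Max (range m))) / Zsum m"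
      using xi_le[OF card nu, of a m] h0 Z by (intro divide_right_mono mult_left_mono) auto
    also have "\<dots> = (1 + hfun \<nu>) ^ Suc n * Wrem \<nu> 0 m" unfolding W0_eq by simp
    finally show "Qf \<nu> n m a \<le> (1 + hfun \<nu>) ^ Suc n * Wrem \<nu> 0 m" .
  qed
qed

lemma Q_ub: "Qf \<nu> n (m::'i\<Rightarrow>real) a \<le> (1 + hfun \<nu>)^n * xi \<nu> a m / Zsum m"
  by (rule Q_ub_from[OF W_ub])

lemma W_le: "Wrem \<nu> n (m::'i\<Rightarrow>real) \<le> (1 + hfun \<nu>)^n"
proof -
  have h0: "0 \<le> (1 + hfun \<nu>)^n" using hfun_pos[OF nu] by simp
  have "Wrem \<nu> n m \<le> (1 + hfun \<nu>)^n * Wrem \<nu> 0 m" by (rule W_ub)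
  also have "\<dots> \<le> (1 + hfun \<nu>)^n * 1" by (rule mult_left_mono[OF W0_le1 h0])
  finally show ?thesis by simp
qed

end


lemma tendsto_Max_set:
  fixes F :: "nat \<Rightarrow> 'a \<Rightarrow> real"
  assumes "finite S" "S \<noteq> {}" "\<And>b. b \<in> S \<Longrightarrow> (\<lambda>j. F j b) \<longlonglongrightarrow> G b"
  shows "(\<lambda>j. Max (F j ` S)) \<longlonglongrightarrow> Max (G ` S)"
  using assms
proof (induction S rule: finite_ne_induct)
  case (singleton x) thus ?case by simp
next
  case (insert x S)
  have "(\<lambda>j. max (F j x) (Max (F j ` S))) \<longlonglongrightarrow> max (G x) (Max (G ` S))"
    using insert by (intro tendsto_max) auto
  thus ?case using insert by (simp add: Max_insert)
qed

lemma tendsto_Max_range: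
  fixes F :: "nat \<Rightarrow> 'i::finite \<Rightarrow> real"
  assumes "\<And>b. (\<lambda>j. F j b) \<longlonglongrightarrow> G b"
  shows "(\<lambda>j. Max (range (F j))) \<longlonglongrightarrow> Max (range G)"
  by (rule tendsto_Max_set) (use assms in auto)

definition SC :: "(('i::finite \<Rightarrow> real) \<Rightarrow> real) \<Rightarrow> bool" where
  "SC F \<longleftrightarrow> (\<forall>m s. (\<forall>x. (\<lambda>j. s j x) \<longlonglongrightarrow> m x) \<longrightarrow> (\<lambda>j. F (s j)) \<longlonglongrightarrow> F m)"

lemma Zsum_tendsto: "(\<And>x. (\<lambda>j. s j x) \<longlonglongrightarrow> (m::'i::finite\<Rightarrow>real) x) \<Longrightarrow> (\<lambda>j. Zsum (s j)) \<longlonglongrightarrow> Zsum m"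
  unfolding Zsum_def by (intro tendsto_sum tendsto_exp) auto

lemma pa_tendsto: "(\<And>x. (\<lambda>j. s j x) \<longlonglongrightarrow> (m::'i::finite\<Rightarrow>real) x) \<Longrightarrow> (\<lambda>j. pa (s j) a) \<longlonglongrightarrow> pa m a"
  unfolding pa_def using Zsum_pos[of m] by (intro tendsto_divide tendsto_exp Zsum_tendsto) auto

lemma fdens_tendsto: "(\<And>x. (\<lambda>j. s j x) \<longlonglongrightarrow> (m::'i::finite\<Rightarrow>real) x) \<Longrightarrow> (\<lambda>j. fdens \<nu> (s j) a y) \<longlonglongrightarrow> fdens \<nu> m a y"
  unfolding fdens_def by (intro tendsto_intros pa_tendsto) auto

lemma sh_tendsto: "(\<And>x. (\<lambda>j. s j x) \<longlonglongrightarrow> (m::'i::finite\<Rightarrow>real) x) \<Longrightarrow> (\<lambda>j. sh (s j) a t x) \<longlonglongrightarrow> sh m a t x"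
  unfolding sh_def by (intro tendsto_intros) auto

lemma SC_D: "SC F \<Longrightarrow> (\<And>x. (\<lambda>j. s j x) \<longlonglongrightarrow> m x) \<Longrightarrow> (\<lambda>j. F (s j)) \<longlonglongrightarrow> F m"
  unfolding SC_def by blast

lemma SC_line_meas: assumes "SC F"
  shows "(\<lambda>y. F (sh (m::'i::finite\<Rightarrow>real) a (Jfun \<nu> y))) \<in> borel_measurable borel"
proof (rule borel_measurable_continuous_onI, rule continuous_on_sequentiallyI)
  fix u :: "nat \<Rightarrow> real" and y assume u: "u \<longlonglongrightarrow> y"
  have "\<And>x. (\<lambda>n. sh m a (Jfun \<nu> (u n)) x) \<longlonglongrightarrow> sh m a (Jfun \<nu> y) x"
    unfolding sh_def Jfun_def by (intro tendsto_intros u)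
  thus "(\<lambda>n. F (sh m a (Jfun \<nu> (u n)))) \<longlonglongrightarrow> F (sh m a (Jfun \<nu> y))"
    by (rule SC_D[OF assms])
qed

context
  fixes \<nu> :: real
  assumes card: "CARD('i::finite) \<ge> 2" and nu: "0 < \<nu>" "\<nu> < 1"
begin

definition wb :: "nat \<Rightarrow> real \<Rightarrow> real" where
  "wb n y = indicator {0..} y *\<^sub>R ((1 + hfun \<nu>)^n * \<nu> * exp (-\<nu>*y) + (1 + hfun \<nu>)^n * exp (-1*y))"

lemma wb_int: "integrable lborel (wb n)"
proof -
  have "set_integrable lborel {0..} (\<lambda>y. (1 + hfun \<nu>)^n * \<nu> * exp (-\<nu>*y) + (1 + hfun \<nu>)^n * exp (-1*y))"
    by (intro set_integral_add(1) exp_set_integral_K) (use nu in auto)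
  thus ?thesis unfolding wb_def set_integrable_def .
qed

lemma Qint_meas: assumes "SC (Wrem \<nu> n :: ('i\<Rightarrow>real) \<Rightarrow> real)"
  shows "(\<lambda>y. indicator {0..} y *\<^sub>R (Wrem \<nu> n (sh (m::'i\<Rightarrow>real) a (Jfun \<nu> y)) * fdens \<nu> m a y)) \<in> borel_measurable lborel"
proof -
  have [measurable]: "(\<lambda>y. Wrem \<nu> n (sh m a (Jfun \<nu> y))) \<in> borel_measurable borel"
    by (rule SC_line_meas[OF assms])
  show ?thesis unfolding fdens_def by measurable
qed

lemma Qint_bound: "norm (indicator {0..} y *\<^sub>R (Wrem \<nu> n (sh (m::'i\<Rightarrow>real) a (Jfun \<nu> y)) * fdens \<nu> m a y)) \<le> wb n y"
proof (cases "0 \<le> y")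
  case True
  have w0: "0 \<le> Wrem \<nu> n (sh m a (Jfun \<nu> y))" by (rule W_nonneg[OF nu(1)])
  have f0: "0 \<le> fdens \<nu> m a y" by (rule fdens_nonneg[OF nu(1)])
  have "Wrem \<nu> n (sh m a (Jfun \<nu> y)) * fdens \<nu> m a y \<le> (1 + hfun \<nu>)^n * (\<nu> * exp (-\<nu>*y) + exp (-y))"
    by (rule mult_mono[OF W_le[OF card nu] fdens_le[OF nu True]]) (use w0 f0 hfun_pos[OF nu] in auto)
  thus ?thesis using True w0 f0 unfolding wb_def by (simp add: algebra_simps)
qed (simp add: wb_def)

lemma Qint_integrable: assumes "SC (Wrem \<nu> n :: ('i\<Rightarrow>real) \<Rightarrow> real)"
  shows "set_integrable lborel {0..} (\<lambda>y. Wrem \<nu> n (sh (m::'i\<Rightarrow>real) a (Jfun \<nu> y)) * fdens \<nu> m a y)"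
  unfolding set_integrable_def
proof (rule Bochner_Integration.integrable_bound[OF wb_int Qint_meas[OF assms]])
  show "AE x in lborel. norm (indicator {0..} x *\<^sub>R (Wrem \<nu> n (sh m a (Jfun \<nu> x)) * fdens \<nu> m a x)) \<le> norm (wb n x)"
  proof (rule AE_I2)
    fix x
    have "0 \<le> wb n x" using Qint_bound[of x n m a] by (meson norm_ge_zero order_trans)
    thus "norm (indicator {0..} x *\<^sub>R (Wrem \<nu> n (sh m a (Jfun \<nu> x)) * fdens \<nu> m a x)) \<le> norm (wb n x)"
      using Qint_bound[of x n m a] by simp
  qed
qed

lemma W_SC: "SC (Wrem \<nu> n :: ('i\<Rightarrow>real) \<Rightarrow> real)"
proof (induction n)
  case 0
  show ?case unfolding SC_def Wrem.simps
    by (intro allI impI tendsto_Max_range pa_tendsto) auto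
next
  case (Suc n)
  show ?case unfolding SC_def Wrem_Suc
  proof (intro allI impI tendsto_Max_range)
    fix m :: "'i \<Rightarrow> real" and s a
    assume s: "\<forall>x. (\<lambda>j. s j x) \<longlonglongrightarrow> m x"
    show "(\<lambda>j. Qf \<nu> n (s j) a) \<longlonglongrightarrow> Qf \<nu> n m a"
      unfolding Qf_def set_lebesgue_integral_def
    proof (rule integral_dominated_convergence[where w="wb n"])
      show "(\<lambda>y. indicator {0..} y *\<^sub>R (Wrem \<nu> n (sh m a (Jfun \<nu> y)) * fdens \<nu> m a y)) \<in> borel_measurable lborel"
        by (rule Qint_meas[OF Suc.IH])
      show "\<And>j. (\<lambda>y. indicator {0..} y *\<^sub>R (Wrem \<nu> n (sh (s j) a (Jfun \<nu> y)) * fdens \<nu> (s j) a y)) \<in> borel_measurable lborel"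
        by (rule Qint_meas[OF Suc.IH])
      show "integrable lborel (wb n)" by (rule wb_int)
      show "\<And>j. AE y in lborel. norm (indicator {0..} y *\<^sub>R (Wrem \<nu> n (sh (s j) a (Jfun \<nu> y)) * fdens \<nu> (s j) a y)) \<le> wb n y"
        by (rule AE_I2) (rule Qint_bound)
      show "AE y in lborel. (\<lambda>j. indicator {0..} y *\<^sub>R (Wrem \<nu> n (sh (s j) a (Jfun \<nu> y)) * fdens \<nu> (s j) a y))
              \<longlonglongrightarrow> indicator {0..} y *\<^sub>R (Wrem \<nu> n (sh m a (Jfun \<nu> y)) * fdens \<nu> m a y)"
      proof (rule AE_I2)
        fix y
        have "(\<lambda>j. Wrem \<nu> n (sh (s j) a (Jfun \<nu> y))) \<longlonglongrightarrow> Wrem \<nu> n (sh m a (Jfun \<nu> y))"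
          by (rule SC_D[OF Suc.IH], rule sh_tendsto) (use s in blast)
        moreover have "(\<lambda>j. fdens \<nu> (s j) a y) \<longlonglongrightarrow> fdens \<nu> m a y" by (rule fdens_tendsto) (use s in blast)
        ultimately show "(\<lambda>j. indicator {0..} y *\<^sub>R (Wrem \<nu> n (sh (s j) a (Jfun \<nu> y)) * fdens \<nu> (s j) a y))
              \<longlonglongrightarrow> indicator {0..} y *\<^sub>R (Wrem \<nu> n (sh m a (Jfun \<nu> y)) * fdens \<nu> m a y)"
          by (rule tendsto_scaleR[OF tendsto_const tendsto_mult])
      qed
    qed
  qed
qed

lemma Q_integrable: "set_integrable lborel {0..} (\<lambda>y. Wrem \<nu> n (sh (m::'i\<Rightarrow>real) a (Jfun \<nu> y)) * fdens \<nu> m a y)"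
  by (rule Qint_integrable[OF W_SC])

end


lemma S_Suc: "(\<Sum>j\<in>{1..Suc n}. (g::real)^j) = g * (1 + (\<Sum>j\<in>{1..n}. g^j))"
proof (induction n)
  case 0 thus ?case by simp
next
  case (Suc n)
  have "(\<Sum>j\<in>{1..Suc (Suc n)}. g^j) = (\<Sum>j\<in>{1..Suc n}. g^j) + g^(Suc (Suc n))"
    by (simp add: sum.cl_ivl_Suc)
  moreover have "(\<Sum>j\<in>{1..Suc n}. g^j) = (\<Sum>j\<in>{1..n}. g^j) + g^(Suc n)"
    by (simp add: sum.cl_ivl_Suc)
  moreover have "g * (1 + (\<Sum>j\<in>{1..Suc n}. g^j)) = g * (1 + (\<Sum>j\<in>{1..n}. g^j)) + g^(Suc (Suc n))"
    unfolding calculation(2) by (simp add: algebra_simps)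
  ultimately show ?case using Suc.IH by linarith
qed

definition Cf :: "real \<Rightarrow> ('i::finite \<Rightarrow> real) \<Rightarrow> real" where "Cf \<nu> m = exp (minpair \<nu> m / (1-\<nu>))"
definition Sg :: "real \<Rightarrow> nat \<Rightarrow> real" where "Sg \<nu> n = (\<Sum>j\<in>{1..n}. gfun \<nu> ^ j)"

context
  fixes \<nu> :: real
  assumes card: "CARD('i::finite) \<ge> 2" and nu: "0 < \<nu>" "\<nu> < 1"
begin


lemma Sg_nonneg: "0 \<le> Sg \<nu> n"
  unfolding Sg_def using gfun_pos[OF nu] by (intro sum_nonneg) simp

lemma W_lb_from:
  assumes LB: "\<And>(m::'i\<Rightarrow>real) a. (xi \<nu> a m + Cf \<nu> m * hfun \<nu> * Sg \<nu> n) / Zsum m \<le> Qf \<nu> n m a"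
  shows "(exp (Max (range m)) + hfun \<nu> * Cf \<nu> m * (1 + Sg \<nu> n)) / Zsum (m::'i\<Rightarrow>real) \<le> Wrem \<nu> (Suc n) m"
proof -
  obtain x1 where x1: "\<And>b. m b \<le> m x1" using argmax_ex by blast
  obtain b where b: "b \<noteq> x1" using other_ex[OF card] by blast
  have M: "Max (range m) = m x1" by (rule Max_range_eq) (rule x1)
  have xg: "exp (m x1) + hfun \<nu> * Cf \<nu> m \<le> xi \<nu> b m" unfolding Cf_def
    by (rule xi_ge[OF nu _ b]) (use x1 in auto)
  have "(exp (Max (range m)) + hfun \<nu> * Cf \<nu> m * (1 + Sg \<nu> n)) / Zsum m \<le> (xi \<nu> b m + Cf \<nu> m * hfun \<nu> * Sg \<nu> n) / Zsum m"
    using xg Zsum_pos[of m] unfolding M by (intro divide_right_mono) (auto simp: algebra_simps)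
  also have "\<dots> \<le> Qf \<nu> n m b" by (rule LB)
  also have "\<dots> \<le> Wrem \<nu> (Suc n) m" unfolding Wrem_Suc by (rule Max_range_ge)
  finally show ?thesis .
qed

lemma Cf_sh: "Cf \<nu> m * exp (min t (-\<nu>*t) / (1-\<nu>)) \<le> Cf \<nu> (sh (m::'i\<Rightarrow>real) a t)"
proof -
  have "minpair \<nu> m + min t (-\<nu>*t) \<le> minpair \<nu> (sh m a t)" by (rule minpair_sh[OF card nu(1)])
  hence "(minpair \<nu> m + min t (-\<nu>*t)) / (1-\<nu>) \<le> minpair \<nu> (sh m a t) / (1-\<nu>)"
    using nu by (intro divide_right_mono) auto
  hence "exp (minpair \<nu> m / (1-\<nu>) + min t (-\<nu>*t) / (1-\<nu>)) \<le> exp (minpair \<nu> (sh m a t) / (1-\<nu>))"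
    by (simp add: add_divide_distrib)
  thus ?thesis unfolding Cf_def exp_add .
qed

lemma Q_lb: "(xi \<nu> a m + Cf \<nu> m * hfun \<nu> * Sg \<nu> n) / Zsum m \<le> Qf \<nu> n (m::'i\<Rightarrow>real) a"
proof (induction n arbitrary: m a)
  case 0
  show ?case unfolding Qf_def Q0(2)[OF nu card] by (simp add: Sg_def)
next
  case (Suc n)
  define K where "K = hfun \<nu> * (1 + Sg \<nu> n)"
  have K0: "0 \<le> K" unfolding K_def using hfun_pos[OF nu] Sg_nonneg[of n] by simp
  define \<psi> where "\<psi> = (\<lambda>y. exp (min (Jfun \<nu> y) (-\<nu> * Jfun \<nu> y) / (1-\<nu>) - y))"
  have Z: "Zsum m > 0" by (rule Zsum_pos)
  have C0: "Cf \<nu> m > 0" unfolding Cf_def by simp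
  have pw: "Wrem \<nu> 0 (sh m a (Jfun \<nu> y)) * fdens \<nu> m a y + (K * Cf \<nu> m / Zsum m) * \<psi> y
            \<le> Wrem \<nu> (Suc n) (sh m a (Jfun \<nu> y)) * fdens \<nu> m a y" for y
  proof -
    define m' where "m' = sh m a (Jfun \<nu> y)"
    have Z': "Zsum m' > 0" by (rule Zsum_pos)
    have A0: "(exp (Max (range m')) + hfun \<nu> * Cf \<nu> m' * (1 + Sg \<nu> n)) / Zsum m' \<le> Wrem \<nu> (Suc n) m'"
      by (rule W_lb_from[OF Suc.IH])
    have A: "Wrem \<nu> 0 m' + K * Cf \<nu> m' / Zsum m' \<le> Wrem \<nu> (Suc n) m'"
      using A0 unfolding W0_eq K_def by (simp add: add_divide_distrib algebra_simps)
    have f: "fdens \<nu> m a y = Zsum m' * exp (-y) / Zsum m" unfolding m'_def by (rule fdens_eq[OF nu(1)])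
    have f0: "0 \<le> fdens \<nu> m a y" by (rule fdens_nonneg[OF nu(1)])
    have B: "Cf \<nu> m * exp (min (Jfun \<nu> y) (-\<nu> * Jfun \<nu> y) / (1-\<nu>)) \<le> Cf \<nu> m'" unfolding m'_def by (rule Cf_sh)
    have ps: "\<psi> y = exp (min (Jfun \<nu> y) (-\<nu> * Jfun \<nu> y) / (1-\<nu>)) * exp (-y)"
      unfolding \<psi>_def using mult_exp_exp[of "min (Jfun \<nu> y) (-\<nu> * Jfun \<nu> y) / (1-\<nu>)" "-y"] by simp
    have "(K * Cf \<nu> m / Zsum m) * \<psi> y = K * (Cf \<nu> m * exp (min (Jfun \<nu> y) (-\<nu> * Jfun \<nu> y) / (1-\<nu>))) * exp (-y) / Zsum m"
      unfolding ps by simp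
    also have "\<dots> \<le> K * Cf \<nu> m' * exp (-y) / Zsum m"
      using B K0 Z by (intro divide_right_mono mult_right_mono mult_left_mono) auto
    also have "\<dots> = (K * Cf \<nu> m' / Zsum m') * fdens \<nu> m a y" unfolding f using Z' by simp
    finally have "Wrem \<nu> 0 m' * fdens \<nu> m a y + (K * Cf \<nu> m / Zsum m) * \<psi> y \<le> (Wrem \<nu> 0 m' + K * Cf \<nu> m' / Zsum m') * fdens \<nu> m a y"
      by (simp add: algebra_simps)
    also have "\<dots> \<le> Wrem \<nu> (Suc n) m' * fdens \<nu> m a y" by (rule mult_right_mono[OF A f0])
    finally show ?thesis unfolding m'_def .
  qed
  have "(LINT y:{0..}|lborel. Wrem \<nu> 0 (sh m a (Jfun \<nu> y)) * fdens \<nu> m a y + (K * Cf \<nu> m / Zsum m) * \<psi> y)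
        \<le> Qf \<nu> (Suc n) m a"
    unfolding Qf_def
  proof (rule set_integral_mono)
    show "set_integrable lborel {0..} (\<lambda>y. Wrem \<nu> 0 (sh m a (Jfun \<nu> y)) * fdens \<nu> m a y + (K * Cf \<nu> m / Zsum m) * \<psi> y)"
      unfolding \<psi>_def by (intro set_integral_add(1) set_integrable_mult_right Q0(1)[OF nu card] psi_integral(1)[OF nu])
    show "set_integrable lborel {0..} (\<lambda>y. Wrem \<nu> (Suc n) (sh m a (Jfun \<nu> y)) * fdens \<nu> m a y)"
      by (rule Q_integrable[OF card nu])
  qed (rule pw)
  moreover have "(LINT y:{0..}|lborel. Wrem \<nu> 0 (sh m a (Jfun \<nu> y)) * fdens \<nu> m a y + (K * Cf \<nu> m / Zsum m) * \<psi> y)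
        = xi \<nu> a m / Zsum m + (K * Cf \<nu> m / Zsum m) * gfun \<nu>"
  proof -
    have "(LINT y:{0..}|lborel. Wrem \<nu> 0 (sh m a (Jfun \<nu> y)) * fdens \<nu> m a y + (K * Cf \<nu> m / Zsum m) * \<psi> y)
       = (LINT y:{0..}|lborel. Wrem \<nu> 0 (sh m a (Jfun \<nu> y)) * fdens \<nu> m a y) + (LINT y:{0..}|lborel. (K * Cf \<nu> m / Zsum m) * \<psi> y)"
      unfolding \<psi>_def by (intro set_integral_add(2) set_integrable_mult_right Q0(1)[OF nu card] psi_integral(1)[OF nu])
    also have "\<dots> = xi \<nu> a m / Zsum m + (K * Cf \<nu> m / Zsum m) * gfun \<nu>"
      unfolding set_integral_mult_right Q0(2)[OF nu card] \<psi>_def psi_integral(2)[OF nu] ..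
    finally show ?thesis .
  qed
  moreover have "xi \<nu> a m / Zsum m + (K * Cf \<nu> m / Zsum m) * gfun \<nu> = (xi \<nu> a m + Cf \<nu> m * hfun \<nu> * Sg \<nu> (Suc n)) / Zsum m"
    unfolding K_def Sg_def S_Suc using Z by (simp add: field_simps)
  ultimately show ?case by simp
qed

end


theorem theorem1:
  fixes \<nu> :: real and L :: nat
  assumes "CARD('i::finite) \<ge> 2" and "0 < \<nu>" and "\<nu> < 1" and "L \<ge> 1"
  shows "(\<forall>k < L. \<forall>(m :: 'i \<Rightarrow> real) a.
            qLB \<nu> L k m a \<le> qfun \<nu> L k m a \<and> qfun \<nu> L k m a \<le> qUB \<nu> L k m a)
       \<and> (\<forall>k < L. \<forall>(m :: 'i \<Rightarrow> real) x1 x2.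
            x1 \<noteq> x2 \<and> (\<forall>y. m y \<le> m x1) \<and> (\<forall>y. y \<noteq> x1 \<longrightarrow> m y \<le> m x2) \<longrightarrow>
              qLB \<nu> L k m x2 = Max (range (qLB \<nu> L k m))
            \<and> Max (range (qLB \<nu> L k m)) \<le> Vstar \<nu> L k m
            \<and> Vstar \<nu> L k m \<le> Max (range (qUB \<nu> L k m))
            \<and> Max (range (qUB \<nu> L k m)) = qUB \<nu> L k m x2)"
proof -
  note card = assms(1) and nu = assms(2,3)
  have LBe: "qLB \<nu> L k m a = (xi \<nu> a m + Cf \<nu> m * hfun \<nu> * Sg \<nu> (L - k - 1)) / Zsum m" for k m a
    unfolding qLB_def Cf_def Sg_def by simp
  have UBe: "qUB \<nu> L k m a = (1 + hfun \<nu>)^(L - k - 1) * xi \<nu> a m / Zsum m" for k m a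
    unfolding qUB_def by simp
  have P1: "qLB \<nu> L k m a \<le> qfun \<nu> L k m a \<and> qfun \<nu> L k m a \<le> qUB \<nu> L k m a"
    if "k < L" for k and m :: "'i \<Rightarrow> real" and a
    unfolding qfun_eq[OF that] LBe UBe using Q_lb[OF card nu] Q_ub[OF card nu] by auto
  have P2: "qLB \<nu> L k m x2 = Max (range (qLB \<nu> L k m))
            \<and> Max (range (qLB \<nu> L k m)) \<le> Vstar \<nu> L k m
            \<and> Vstar \<nu> L k m \<le> Max (range (qUB \<nu> L k m))
            \<and> Max (range (qUB \<nu> L k m)) = qUB \<nu> L k m x2"
    if k: "k < L" and h: "x1 \<noteq> x2" "\<forall>y. m y \<le> m x1" "\<forall>y. y \<noteq> x1 \<longrightarrow> m y \<le> m x2"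
    for k and m :: "'i \<Rightarrow> real" and x1 x2
  proof -
    have Z: "Zsum m > 0" by (rule Zsum_pos)
    have xx: "xi \<nu> a m \<le> xi \<nu> x2 m" for a by (rule xi_x2[OF nu h])
    have h0: "0 \<le> (1 + hfun \<nu>)^(L - k - 1)" using hfun_pos[OF nu] by simp
    have lbmax: "Max (range (qLB \<nu> L k m)) = qLB \<nu> L k m x2"
      by (rule Max_range_eq) (unfold LBe, use xx Z in \<open>auto intro!: divide_right_mono\<close>)
    have ubmax: "Max (range (qUB \<nu> L k m)) = qUB \<nu> L k m x2"
      by (rule Max_range_eq) (unfold UBe, use xx Z h0 in \<open>auto intro!: divide_right_mono mult_left_mono\<close>)
    have V: "Vstar \<nu> L k m = Max (range (Qf \<nu> (L - k - 1) m))" by (rule Vstar_eq[OF k])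
    have "qLB \<nu> L k m x2 \<le> Vstar \<nu> L k m"
      using P1[OF k, of m x2] unfolding V qfun_eq[OF k] by (meson Max_range_ge order_trans)
    moreover have "Vstar \<nu> L k m \<le> Max (range (qUB \<nu> L k m))"
      unfolding V
    proof (rule Max_range_le)
      fix b
      have "Qf \<nu> (L - k - 1) m b \<le> qUB \<nu> L k m b" using P1[OF k, of m b] unfolding qfun_eq[OF k] by simp
      also have "\<dots> \<le> Max (range (qUB \<nu> L k m))" by (rule Max_range_ge)
      finally show "Qf \<nu> (L - k - 1) m b \<le> Max (range (qUB \<nu> L k m))" .
    qed
    ultimately show ?thesis using lbmax ubmax by simp
  qed
  show ?thesis using P1 P2 by blast
qed



end
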